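(* Let $Y$ be a connected, non-contractible $T_1$-space. Then $Y$ is not homotopy equivalent to any finite topological space. *)

theory Defs
  imports "HOL-Analysis.Analysis"
begin

end

theory Submission
  imports Defs
begin

theorem mainTheorem6:
  fixes Y :: "'a topology" and X :: "'b topology"
  assumes "connected_space Y"
    and "\<not> contractible_space Y"
    and "t1_space Y"
    and "finite (topspace X)"
  shows "\<not> (Y homotopy_equivalent_space X)"
proof
  assume "Y homotopy_equivalent_space X"
  then obtain f g where f: "continuous_map Y X f" and g: "continuous_map X Y g"
    and hom: "homotopic_with (\<lambda>x. True) Y Y (g \<circ> f) id"
    unfolding homotopy_equivalent_space_def by blast
  define S where "S = (g \<circ> f) ` topspace Y"
  have cm: "continuous_map Y Y (g \<circ> f)" using f g continuous_map_compose by blast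
  have con: "connectedin Y S"
    unfolding S_def using connectedin_continuous_map_image[OF cm] assms(1)
    by (simp add: connectedin_topspace)
  have sub: "S \<subseteq> topspace Y" unfolding S_def using cm by (auto simp: continuous_map_def)
  have fin: "finite S"
  proof -
    have "S \<subseteq> g ` topspace X" unfolding S_def using f by (auto simp: continuous_map_def)
    then show ?thesis using assms(4) finite_subset by blast
  qed
  have "subtopology Y S = discrete_topology S"
    using subtopology_eq_discrete_topology_finite[OF assms(3) sub fin] .
  moreover have "connectedin (subtopology Y S) S"
    using con sub by (simp add: connectedin_subtopology)
  ultimately obtain a where a: "S \<subseteq> {a}"
    by (metis connectedin_discrete_topology)
  have eq: "\<And>x. x \<in> topspace Y \<Longrightarrow> g (f x) = a" using a unfolding S_def by auto
  have "homotopic_with (\<lambda>x. True) Y Y (\<lambda>x. a) id"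
    using hom by (rule homotopic_with_eq) (use eq in auto)
  then have "homotopic_with (\<lambda>x. True) Y Y id (\<lambda>x. a)"
    by (simp add: homotopic_with_sym)
  then show False using assms(2) unfolding contractible_space_def by blast
qed

end
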